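(* Let $\Phi:M_n(\mathbb{C})\to M_n(\mathbb{C})$ be a completely positive map with Kraus operators $K_1,\ldots,K_d\in M_n(\mathbb{C})$, i.e. $\Phi(X)=\sum_{j\in[d]}K_jXK_j^*$, and suppose $\Phi$ is Hermitian, i.e. $\Phi=\Phi^*$ where $\Phi^*$ is the adjoint with respect to the Hilbert–Schmidt inner product ($\operatorname{tr}(X\Phi^*(Y))=\operatorname{tr}(\Phi(X)Y)$ for all $X,Y$). For $K\in M_n(\mathbb{C})$ put $K_R=(K+K^* )/2$ and $K_I=-i(K-K^* )/2$. Then the $2d$ Hermitian matrices $K_{1,R},K_{1,I},\ldots,K_{d,R},K_{d,I}$ are Kraus operators for $\Phi$, i.e. $\Phi(X)=\sum_{j\in[d]}\big(K_{j,R}XK_{j,R}+K_{j,I}XK_{j,I}\big)$ for all $X\in M_n(\mathbb{C})$. In particular every Hermitian completely positive map on $M_n(\mathbb{C})$ admits a Kraus representation with at most twice its Kraus rank many Hermitian Kraus operators.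
   Context: The Kraus rank of a completely positive map is the smallest $d$ for which a representation $\Phi(X)=\sum_{j\in[d]}K_jXK_j^*$ exists. *)

theory Defs
  imports "HOL-Analysis.Analysis"
begin

definition cadj :: "complex^'n^'n \<Rightarrow> complex^'n^'n" where
  "cadj A = (\<chi> i j. cnj (A $ j $ i))"

definition herm_part_R :: "complex^'n^'n \<Rightarrow> complex^'n^'n" where
  "herm_part_R K = (\<chi> i j. ((K + cadj K) $ i $ j) / 2)"

definition herm_part_I :: "complex^'n^'n \<Rightarrow> complex^'n^'n" where
  "herm_part_I K = (\<chi> i j. (- \<i>) * ((K - cadj K) $ i $ j) / 2)"

definition kraus_rep :: "(complex^'n^'n \<Rightarrow> complex^'n^'n) \<Rightarrow> nat \<Rightarrow> (nat \<Rightarrow> complex^'n^'n) \<Rightarrow> bool" where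
  "kraus_rep \<Phi> d K \<longleftrightarrow> (\<forall>X. \<Phi> X = (\<Sum>j<d. K j ** X ** cadj (K j)))"

definition completely_positive :: "(complex^'n^'n \<Rightarrow> complex^'n^'n) \<Rightarrow> bool" where
  "completely_positive \<Phi> \<longleftrightarrow> (\<exists>d K. kraus_rep \<Phi> d K)"

definition kraus_rank :: "(complex^'n^'n \<Rightarrow> complex^'n^'n) \<Rightarrow> nat" where
  "kraus_rank \<Phi> = (LEAST d. \<exists>K. kraus_rep \<Phi> d K)"

text \<open>Phi = Phi^*, the adjoint being defined by tr(X Phi^*(Y)) = tr(Phi(X) Y).\<close>
definition hermitian_map :: "(complex^'n^'n \<Rightarrow> complex^'n^'n) \<Rightarrow> bool" where
  "hermitian_map \<Phi> \<longleftrightarrow> (\<forall>X Y. trace (X ** \<Phi> Y) = trace (\<Phi> X ** Y))"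

end

theory Submission imports Defs begin

definition smul :: "complex \<Rightarrow> complex^'n^'n \<Rightarrow> complex^'n^'n" where
  "smul c A = (\<chi> i j. c * A$i$j)"

lemma smul_mult_l: "smul c A ** B = smul c (A ** B)"
  by (simp add: smul_def matrix_matrix_mult_def vec_eq_iff sum_distrib_left mult.assoc)
lemma smul_mult_r: "A ** smul c B = smul c (A ** B)"
  by (simp add: smul_def matrix_matrix_mult_def vec_eq_iff sum_distrib_left ac_simps)
lemma mult_rdistrib: "((A::complex^'n^'n) + B) ** C = A ** C + B ** C"
  by (simp add: matrix_matrix_mult_def vec_eq_iff sum.distrib algebra_simps)
lemma mult_rdiff: "((A::complex^'n^'n) - B) ** C = A ** C - B ** C"
  by (simp add: matrix_matrix_mult_def vec_eq_iff sum_subtractf algebra_simps)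
lemma mult_ldiff: "(C::complex^'n^'n) ** (A - B) = C ** A - C ** B"
  by (simp add: matrix_matrix_mult_def vec_eq_iff sum_subtractf algebra_simps)
lemma smul_sum: "smul c (sum f S) = sum (\<lambda>j. smul c (f j)) S"
  by (simp add: smul_def vec_eq_iff sum_distrib_left)
lemma sum_mult_l: "sum (f::_\<Rightarrow>complex^'n^'n) S ** (B::complex^'n^'n) = sum (\<lambda>j. f j ** B) S"
  by (induction S rule: infinite_finite_induct) (auto simp: mult_rdistrib)
lemma sum_mult_r: "(B::complex^'n^'n) ** sum (f::_\<Rightarrow>complex^'n^'n) S = sum (\<lambda>j. B ** f j) S"
  by (induction S rule: infinite_finite_induct) (auto simp: matrix_add_ldistrib)
lemma trace_sum: "trace (sum f S :: complex^'n^'n) = sum (\<lambda>j. trace (f j)) S"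
  by (induction S rule: infinite_finite_induct) (auto simp: trace_add trace_0[simplified])

lemma R_eq: "herm_part_R K = smul (1/2) (K + cadj K)"
  by (simp add: herm_part_R_def smul_def vec_eq_iff)
lemma I_eq: "herm_part_I K = smul (-\<i>/2) (K - cadj K)"
  by (simp add: herm_part_I_def smul_def vec_eq_iff)

lemma cadj_R: "cadj (herm_part_R K) = herm_part_R K"
  by (simp add: herm_part_R_def cadj_def vec_eq_iff add.commute)
lemma cadj_I: "cadj (herm_part_I K) = herm_part_I K"
  by (simp add: herm_part_I_def cadj_def vec_eq_iff algebra_simps)

lemma key: "herm_part_R K ** X ** herm_part_R K + herm_part_I K ** X ** herm_part_I K
   = smul (1/2) (K ** X ** cadj K + cadj K ** X ** K)"
  unfolding R_eq I_eq
  apply (simp only: smul_mult_l smul_mult_r mult_rdistrib mult_rdiff mult_ldiff matrix_add_ldistrib)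
  apply (simp add: smul_def vec_eq_iff algebra_simps)
  done

lemma trace_zero: assumes "\<And>X. trace (X ** (M::complex^'n^'n)) = 0" shows "M = 0"
proof -
  { fix a b :: 'n
    have "trace ((\<chi> i j. if j = a then (if i = b then 1 else 0) else 0) ** M) = M $ a $ b"
      by (simp add: trace_def matrix_matrix_mult_def if_distrib[where f="\<lambda>x. x * _"] sum.delta cong: if_cong)
    then have "M $ a $ b = 0" using assms by simp }
  then show ?thesis by (simp add: vec_eq_iff)
qed

lemma smul_half: "smul (1/2) (A + A) = A"
  by (simp add: smul_def vec_eq_iff)

lemma trace_swap: "trace ((K ** X ** cadj K) ** (Y::complex^'n^'n)) = trace (X ** (cadj K ** Y ** K))"
proof -
  have "trace ((K ** X ** cadj K) ** Y) = trace (K ** (X ** cadj K ** Y))"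
    by (simp add: matrix_mul_assoc)
  also have "\<dots> = trace ((X ** cadj K ** Y) ** K)" by (rule trace_mul_sym)
  also have "\<dots> = trace (X ** (cadj K ** Y ** K))" by (simp add: matrix_mul_assoc)
  finally show ?thesis .
qed

lemma part1:
  assumes kr: "kraus_rep \<Phi> d K" and hm: "hermitian_map \<Phi>"
  shows "\<Phi> X = (\<Sum>j<d. herm_part_R (K j) ** X ** herm_part_R (K j)
                          + herm_part_I (K j) ** X ** herm_part_I (K j))"
proof -
  define \<Psi> where "\<Psi> Y = (\<Sum>j<d. cadj (K j) ** Y ** K j)" for Y
  have phi: "\<Phi> Y = (\<Sum>j<d. K j ** Y ** cadj (K j))" for Y using kr by (simp add: kraus_rep_def)
  have eq: "\<Phi> Y = \<Psi> Y" for Y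
  proof -
    have "trace (Z ** (\<Phi> Y - \<Psi> Y)) = 0" for Z
    proof -
      have "trace (Z ** \<Phi> Y) = trace (\<Phi> Z ** Y)" using hm by (simp add: hermitian_map_def)
      also have "\<dots> = (\<Sum>j<d. trace ((K j ** Z ** cadj (K j)) ** Y))"
        by (simp add: phi sum_mult_l trace_sum)
      also have "\<dots> = (\<Sum>j<d. trace (Z ** (cadj (K j) ** Y ** K j)))"
        by (simp add: trace_swap)
      also have "\<dots> = trace (Z ** \<Psi> Y)"
        by (simp add: \<Psi>_def sum_mult_r trace_sum)
      finally show ?thesis by (simp add: mult_ldiff trace_sub)
    qed
    then have "\<Phi> Y - \<Psi> Y = 0" by (rule trace_zero)
    then show ?thesis by simp
  qed
  have "(\<Sum>j<d. herm_part_R (K j) ** X ** herm_part_R (K j)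
                          + herm_part_I (K j) ** X ** herm_part_I (K j))
      = smul (1/2) (\<Phi> X + \<Psi> X)"
    by (simp add: key smul_sum[symmetric] phi \<Psi>_def sum.distrib)
  also have "\<dots> = \<Phi> X" by (simp only: eq[of X] smul_half)
  finally show ?thesis by simp
qed

lemma sum_double: "(\<Sum>j<r+r. (f::nat \<Rightarrow> 'a::comm_monoid_add) j) = (\<Sum>j<r. f j + f (j + r))"
proof -
  have "{..<r+r} = {..<r} \<union> {r..<r+r}" by auto
  then have "(\<Sum>j<r+r. f j) = sum f ({..<r} \<union> {r..<r+r})" by simp
  also have "\<dots> = (\<Sum>j<r. f j) + (\<Sum>j\<in>{r..<r+r}. f j)"
    by (rule sum.union_disjoint) auto
  also have "(\<Sum>j\<in>{r..<r+r}. f j) = (\<Sum>j\<in>{0..<r}. f (j + r))"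
    using sum.shift_bounds_nat_ivl[of f 0 r r] by simp
  finally show ?thesis by (simp add: sum.distrib atLeast0LessThan)
qed

theorem mainTheorem6:
  "(\<forall>(\<Phi> :: complex^'n^'n \<Rightarrow> complex^'n^'n) d K.
      kraus_rep \<Phi> d K \<and> hermitian_map \<Phi> \<longrightarrow>
      (\<forall>j<d. cadj (herm_part_R (K j)) = herm_part_R (K j)
             \<and> cadj (herm_part_I (K j)) = herm_part_I (K j)) \<and>
      (\<forall>X. \<Phi> X = (\<Sum>j<d. herm_part_R (K j) ** X ** herm_part_R (K j)
                          + herm_part_I (K j) ** X ** herm_part_I (K j)))) \<and>
   (\<forall>(\<Phi> :: complex^'n^'n \<Rightarrow> complex^'n^'n).
      completely_positive \<Phi> \<and> hermitian_map \<Phi> \<longrightarrow>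
      (\<exists>m H. m \<le> 2 * kraus_rank \<Phi> \<and> (\<forall>j<m. cadj (H j) = H j) \<and> kraus_rep \<Phi> m H))"
proof (rule conjI; intro allI impI)
  fix \<Phi> :: "complex^'n^'n \<Rightarrow> complex^'n^'n" and d K
  assume "kraus_rep \<Phi> d K \<and> hermitian_map \<Phi>"
  then show "(\<forall>j<d. cadj (herm_part_R (K j)) = herm_part_R (K j)
             \<and> cadj (herm_part_I (K j)) = herm_part_I (K j)) \<and>
      (\<forall>X. \<Phi> X = (\<Sum>j<d. herm_part_R (K j) ** X ** herm_part_R (K j)
                          + herm_part_I (K j) ** X ** herm_part_I (K j)))"
    using part1[of \<Phi> d K] by (auto simp: cadj_R cadj_I)
next
  fix \<Phi> :: "complex^'n^'n \<Rightarrow> complex^'n^'n"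
  assume a: "completely_positive \<Phi> \<and> hermitian_map \<Phi>"
  define r where "r = kraus_rank \<Phi>"
  have "\<exists>K. kraus_rep \<Phi> r K"
    unfolding r_def kraus_rank_def
    by (rule LeastI_ex) (use a in \<open>simp add: completely_positive_def\<close>)
  then obtain K where K: "kraus_rep \<Phi> r K" by blast
  define H where "H j = (if j < r then herm_part_R (K j) else herm_part_I (K (j - r)))" for j
  have "kraus_rep \<Phi> (r + r) H"
    unfolding kraus_rep_def
  proof (rule allI)
    fix X
    have "(\<Sum>j<r+r. H j ** X ** cadj (H j)) = (\<Sum>j<r. herm_part_R (K j) ** X ** herm_part_R (K j)
                          + herm_part_I (K j) ** X ** herm_part_I (K j))"
      by (simp add: sum_double H_def cadj_R cadj_I)
    then show "\<Phi> X = (\<Sum>j<r+r. H j ** X ** cadj (H j))"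
      using part1[OF K] a by simp
  qed
  moreover have "\<forall>j<r+r. cadj (H j) = H j" by (simp add: H_def cadj_R cadj_I)
  ultimately show "\<exists>m H. m \<le> 2 * kraus_rank \<Phi> \<and> (\<forall>j<m. cadj (H j) = H j) \<and> kraus_rep \<Phi> m H"
    by (metis r_def mult_2 order_refl)
qed

end
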